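(* Let $\mathbb{K}$ be a computable field, $n>1$, $a=\sum_{j=0}^d c_j s^j\in\mathbb{K}[s]^n$ a non-zero row vector of degree $d$, and let $M\in\mathbb{K}[s]^{n\times(n-1)}$ be the output of the $\mu$-Basis Algorithm (described in the context) on input $a$. Then the columns of $M$ form a $\mu$-basis of $a$.
   Context: $\mu$-Basis Algorithm: (1) Form $A\in\mathbb{K}^{(2d+1)\times n(d+1)}$ whose $(i,\,kn+r)$ entry ($1\le i\le 2d+1$, $0\le k\le d$, $1\le r\le n$) is the $r$-th entry of the row vector $c_{i-1-k}$ (zero if $i-1-k\notin\{0,\dots,d\}$). (2) Compute (possibly only partially, on the relevant columns) the reduced row-echelon form $E$ of $A$; let $p=(p_1<p_2<\dots)$ be the list of pivotal column indices and $\tilde q=(\tilde q_1,\dots,\tilde q_{n-1})$ the list of basic non-pivotal indices. Here a column is pivotal if it is the first column and non-zero or is linearly independent of previous columns, otherwise non-pivotal; with $q$ the set of non-pivotal indices, $\tilde q$ consists of the minimal elements of the classes of $q$ modulo $n$. (3) Initialize $M$ as the $n\times(n-1)$ zero matrix; for each $j=1,\dots,n-1$, with $r=\mathrm{rem}(\tilde q_j-1,n)+1$ and $k=\mathrm{quo}(\tilde q_j-1,n)$, add $s^k$ to $M_{r,j}$; then for each $i=1,\dots,|p|$, with $r=\mathrm{rem}(p_i-1,n)+1$, $k=\mathrm{quo}(p_i-1,n)$, and each $j=1,\dots,n-1$, subtract $E_{i,\tilde q_j}s^k$ from $M_{r,j}$. Output $M$. Definitions: $\mathrm{syz}(a)=\{h\in\mathbb{K}[s]^n\mid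 a\,h=0\}$; for non-zero $h\in\mathbb{K}[s]^n$, $LV(h)$ is the vector of coefficients of $s^{\deg h}$ in its entries, $\deg h=\max_i\deg h_i$. A set $u=\{u_1,\dots,u_{n-1}\}\subset\mathbb{K}[s]^n$ is a $\mu$-basis of $a$ if it has exactly $n-1$ elements, $LV(u_1),\dots,LV(u_{n-1})$ are linearly independent over $\mathbb{K}$, and $u$ is a basis of the $\mathbb{K}[s]$-module $\mathrm{syz}(a)$. *)

theory Defs
  imports "HOL-Computational_Algebra.Polynomial" "Jordan_Normal_Form.Gauss_Jordan_Elimination"
begin

text \<open>All row/column indices below are 0-based (the paper uses 1-based ones).
  A polynomial row vector a in K[s]^n is a vector of dimension n of polynomials.\<close>

definition vdeg :: "'k::zero poly vec \<Rightarrow> nat" where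
  "vdeg h = Max (insert 0 {degree (h $ i) | i. i < dim_vec h})"

definition LV :: "'k::zero poly vec \<Rightarrow> 'k vec" where
  "LV h = vec (dim_vec h) (\<lambda>i. coeff (h $ i) (vdeg h))"

definition syz :: "'k::comm_ring_1 poly vec \<Rightarrow> 'k poly vec set" where
  "syz a = {h \<in> carrier_vec (dim_vec a). a \<bullet> h = 0}"

text \<open>The coefficient matrix A (step 1): entry (i, k*n + r) is the r-th entry of c_(i-k),
  i.e. the coefficient of s^(i-k) in a_r, zero if i-k is not in {0..d}.\<close>
definition coeff_matrix :: "'k::field poly vec \<Rightarrow> 'k mat" where
  "coeff_matrix a = (let n = dim_vec a; d = vdeg a in
     mat (2*d+1) (n*(d+1)) (\<lambda>(i,c). let k = c div n; r = c mod n in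
        if k \<le> i \<and> i - k \<le> d then coeff (a $ r) (i - k) else 0))"

definition pivotal :: "'k::field mat \<Rightarrow> nat \<Rightarrow> bool" where
  "pivotal A c \<longleftrightarrow> c < dim_col A \<and>
     \<not> (\<exists>f. col A c = finsum_vec TYPE('k) (dim_row A) (\<lambda>c'. f c' \<cdot>\<^sub>v col A c') {..<c})"

definition pivots :: "'k::field mat \<Rightarrow> nat list" where
  "pivots A = sorted_list_of_set {c. pivotal A c}"

definition nonpivots :: "'k::field mat \<Rightarrow> nat set" where
  "nonpivots A = {c. c < dim_col A \<and> \<not> pivotal A c}"

definition basic_nonpivots :: "'k::field mat \<Rightarrow> nat \<Rightarrow> nat list" where
  "basic_nonpivots A n = sorted_list_of_set
     {x \<in> nonpivots A. \<forall>y \<in> nonpivots A. y mod n = x mod n \<longrightarrow> x \<le> y}"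

definition mu_basis_alg :: "'k::field poly vec \<Rightarrow> 'k poly mat" where
  "mu_basis_alg a = (let n = dim_vec a; A = coeff_matrix a; E = gauss_jordan_single A;
      p = pivots A; q = basic_nonpivots A n in
      mat n (n - 1) (\<lambda>(r,j).
        (if q ! j mod n = r then monom 1 (q ! j div n) else 0)
        - (\<Sum>i<length p. if p ! i mod n = r then monom (E $$ (i, q ! j)) (p ! i div n) else 0)))"

definition is_mu_basis :: "'k::field poly vec \<Rightarrow> (nat \<Rightarrow> 'k poly vec) \<Rightarrow> bool" where
  "is_mu_basis a u \<longleftrightarrow> (let n = dim_vec a in
     \<comment> \<open>exactly n-1 elements, all non-zero\<close>
     inj_on u {..<n-1} \<and> (\<forall>j<n-1. u j \<in> carrier_vec n \<and> u j \<noteq> 0\<^sub>v n) \<and>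
     \<comment> \<open>leading vectors linearly independent over K\<close>
     (\<forall>g::nat \<Rightarrow> 'k. finsum_vec TYPE('k) n (\<lambda>j. g j \<cdot>\<^sub>v LV (u j)) {..<n-1} = 0\<^sub>v n
        \<longrightarrow> (\<forall>j<n-1. g j = 0)) \<and>
     \<comment> \<open>basis of the K[s]-module syz(a)\<close>
     (\<forall>j<n-1. u j \<in> syz a) \<and>
     (\<forall>h \<in> syz a. \<exists>g::nat \<Rightarrow> 'k poly.
        h = finsum_vec TYPE('k poly) n (\<lambda>j. g j \<cdot>\<^sub>v u j) {..<n-1}) \<and>
     (\<forall>g::nat \<Rightarrow> 'k poly. finsum_vec TYPE('k poly) n (\<lambda>j. g j \<cdot>\<^sub>v u j) {..<n-1} = 0\<^sub>v n
        \<longrightarrow> (\<forall>j<n-1. g j = 0)))"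

end

theory Submission
  imports Defs
begin



lemma sum_single:
  assumes "finite A" "x \<in> A" "\<And>y. y \<in> A \<Longrightarrow> y \<noteq> x \<Longrightarrow> f y = 0"
  shows "sum f A = (f x :: 'a::comm_monoid_add)"
proof -
  have "sum f A = f x + sum f (A - {x})" using assms(1,2) by (simp add: sum.remove)
  also have "sum f (A - {x}) = 0" using assms(3) by (intro sum.neutral) auto
  finally show ?thesis by simp
qed

lemma finsum_vec_eq:
  assumes "finite F" "\<And>f. f \<in> F \<Longrightarrow> vs f \<in> carrier_vec n"
  shows "finsum_vec TYPE('a::comm_monoid_add) n vs F = vec n (\<lambda>i. \<Sum>f\<in>F. vs f $ i)"
proof -
  have cl: "finsum_vec TYPE('a) n vs F \<in> carrier_vec n"
    by (rule finsum_vec_closed) (use assms in auto)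
  show ?thesis
    by (rule eq_vecI) (use cl assms in \<open>auto simp: index_finsum_vec\<close>)
qed

definition cf :: "nat \<Rightarrow> 'k::zero poly vec \<Rightarrow> nat \<Rightarrow> 'k" where
  "cf n h c = coeff (h $ (c mod n)) (c div n)"

definition lead :: "nat \<Rightarrow> 'k::zero poly vec \<Rightarrow> nat \<Rightarrow> bool" where
  "lead n h c \<longleftrightarrow> cf n h c \<noteq> 0 \<and> (\<forall>c'>c. cf n h c' = 0)"

lemma cf_kr: "n > 0 \<Longrightarrow> r < n \<Longrightarrow> cf n h (k * n + r) = coeff (h $ r) k"
  by (simp add: cf_def)

lemma cf_eqI:
  assumes "h \<in> carrier_vec n" "h' \<in> carrier_vec n" "n > 0" "\<And>c. cf n h c = cf n h' c"
  shows "h = h'"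
proof (rule eq_vecI)
  fix r assume r: "r < dim_vec h'"
  show "h $ r = h' $ r"
  proof (rule poly_eqI)
    fix k show "coeff (h $ r) k = coeff (h' $ r) k"
    proof -
      have r': "r < n" using r assms(2) by simp
      show ?thesis using assms(4)[of "k*n+r"] cf_kr[OF assms(3) r', of h k] cf_kr[OF assms(3) r', of h' k] by simp
    qed
  qed
qed (use assms in auto)

lemma degree_le_vdeg: "i < dim_vec h \<Longrightarrow> degree (h $ i) \<le> vdeg h"
  unfolding vdeg_def by (rule Max_ge) auto

lemma lead_exists:
  assumes h: "h \<in> carrier_vec n" and nz: "h \<noteq> 0\<^sub>v n"
  shows "\<exists>c. lead n h c"
proof -
  from h nz obtain r where r: "r < n" "h $ r \<noteq> 0" by (auto simp: vec_eq_iff)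
  hence n: "n > 0" by auto
  let ?S = "{c. cf n h c \<noteq> 0}"
  have sub: "?S \<subseteq> {..< n * Suc (vdeg h)}"
  proof
    fix c assume "c \<in> ?S"
    hence "c div n \<le> degree (h $ (c mod n))" unfolding cf_def by (simp add: le_degree)
    also have "\<dots> \<le> vdeg h" using degree_le_vdeg[of "c mod n" h] h n by auto
    finally have "c div n < Suc (vdeg h)" by simp
    hence "c < n * Suc (vdeg h)"
      using div_less_iff_less_mult[OF n] by (simp add: mult.commute)
    thus "c \<in> {..< n * Suc (vdeg h)}" by simp
  qed
  hence fin: "finite ?S" by (rule finite_subset) simp
  have "cf n h (degree (h $ r) * n + r) \<noteq> 0" using r by (simp add: cf_kr[OF n r(1)])
  hence ne: "?S \<noteq> {}" by auto
  let ?c = "Max ?S"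
  have "lead n h ?c" unfolding lead_def
  proof (intro conjI allI impI)
    show "cf n h ?c \<noteq> 0" using Max_in[OF fin ne] by simp
    fix c' assume c': "?c < c'"
    show "cf n h c' = 0"
    proof (rule ccontr)
      assume "cf n h c' \<noteq> 0"
      hence "c' \<le> ?c" using Max_ge[OF fin] by simp
      with c' show False by simp
    qed
  qed
  thus ?thesis by (rule exI)
qed

lemma lead_unique: "lead n h c \<Longrightarrow> lead n h c' \<Longrightarrow> c = c'"
proof (rule ccontr)
  assume l: "lead n h c" "lead n h c'" and ne: "c \<noteq> c'"
  show False
  proof (cases "c < c'")
    case True thus False using l unfolding lead_def by auto
  next
    case False hence "c' < c" using ne by simp
    thus False using l unfolding lead_def by auto
  qed
qed

lemma lead_vdeg:
  assumes h: "h \<in> carrier_vec n" and l: "lead n h c" and n: "n > 0"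
  shows "vdeg h = c div n"
proof -
  have 1: "degree (h $ i) \<le> c div n" if i: "i < n" for i
  proof (rule degree_le, intro allI impI)
    fix k assume k: "c div n < k"
    have "c < k * n + i"
    proof -
      have "c < (c div n + 1) * n" using n
        using n by (simp add: dividend_less_times_div mult.commute)
      also have "\<dots> \<le> k * n" using k by (intro mult_right_mono) auto
      finally show ?thesis by simp
    qed
    thus "coeff (h $ i) k = 0" using l cf_kr[OF n i, of h k] unfolding lead_def by auto
  qed
  have 2: "c div n \<le> degree (h $ (c mod n))"
    using l unfolding lead_def cf_def by (simp add: le_degree)
  have cm: "c mod n < n" using n by simp
  have "vdeg h = Max (insert 0 {degree (h $ i) |i. i < n})" using h unfolding vdeg_def by simp
  also have "\<dots> = c div n"
  proof (rule antisym)
    show "Max (insert 0 {degree (h $ i) |i. i < n}) \<le> c div n"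
      by (rule Max.boundedI) (use 1 in auto)
    have "degree (h $ (c mod n)) \<le> Max (insert 0 {degree (h $ i) |i. i < n})"
      by (rule Max_ge) (use cm in auto)
    with 2 1[OF cm] show "c div n \<le> Max (insert 0 {degree (h $ i) |i. i < n})" by simp
  qed
  finally show ?thesis .
qed




lemma cf_smult:
  assumes h: "h \<in> carrier_vec n" and n: "n > 0"
  shows "cf n (g \<cdot>\<^sub>v h) c' = (\<Sum>i\<le>c' div n. coeff g i * cf n h (c' - i * n))"
proof -
  let ?k = "c' div n" and ?r = "c' mod n"
  have r: "?r < n" using n by simp
  have "cf n (g \<cdot>\<^sub>v h) c' = coeff (g * h $ ?r) ?k" unfolding cf_def using h r by simp
  also have "\<dots> = (\<Sum>i\<le>?k. coeff g i * coeff (h $ ?r) (?k - i))" by (rule coeff_mult)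
  also have "\<dots> = (\<Sum>i\<le>?k. coeff g i * cf n h (c' - i * n))"
  proof (rule sum.cong[OF refl])
    fix i assume "i \<in> {..?k}"
    hence i: "i \<le> ?k" by simp
    have e: "c' - i * n = (?k - i) * n + ?r"
    proof -
      have "?k * n + ?r = c'" by simp
      moreover have "i * n \<le> ?k * n" using i by simp
      ultimately show ?thesis by (simp add: diff_mult_distrib)
    qed
    show "coeff g i * coeff (h $ ?r) (?k - i) = coeff g i * cf n h (c' - i * n)"
      unfolding e cf_kr[OF n r] ..
  qed
  finally show ?thesis .
qed

lemma lead_smult:
  fixes h :: "'k::field poly vec"
  assumes h: "h \<in> carrier_vec n" and n: "n > 0" and l: "lead n h c" and g: "g \<noteq> 0"
  shows "lead n (g \<cdot>\<^sub>v h) (degree g * n + c)"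
    "cf n (g \<cdot>\<^sub>v h) (degree g * n + c) = lead_coeff g * cf n h c"
proof -
  let ?D = "degree g * n + c"
  have term0: "coeff g i * cf n h (c' - i * n) = 0"
    if c': "c' \<ge> ?D" and i: "i \<le> c' div n" and ne: "c' > ?D \<or> i \<noteq> degree g" for c' i
  proof (rule ccontr)
    assume "coeff g i * cf n h (c' - i * n) \<noteq> 0"
    hence g0: "coeff g i \<noteq> 0" and h0: "cf n h (c' - i * n) \<noteq> 0" by auto
    from g0 have ig: "i \<le> degree g" by (rule le_degree)
    from h0 l have le: "c' - i * n \<le> c" unfolding lead_def using not_le by blast
    have "i * n \<le> c' div n * n" using i by simp
    also have "\<dots> \<le> c'" by simp
    finally have inc: "i * n \<le> c'" .
    have "i * n \<le> degree g * n" using ig by simp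
    with le inc c' have eq: "c' = ?D" "i * n = degree g * n" by linarith+
    from eq(2) n have "i = degree g" by simp
    with eq(1) ne show False by simp
  qed
  have val: "cf n (g \<cdot>\<^sub>v h) ?D = lead_coeff g * cf n h c"
  proof -
    have "cf n (g \<cdot>\<^sub>v h) ?D = (\<Sum>i\<le>?D div n. coeff g i * cf n h (?D - i * n))"
      by (rule cf_smult[OF h n])
    also have "\<dots> = coeff g (degree g) * cf n h (?D - degree g * n)"
    proof (rule sum_single)
      show "degree g \<in> {..?D div n}" using n by simp
    qed (use term0 in auto)
    finally show ?thesis by simp
  qed
  thus "cf n (g \<cdot>\<^sub>v h) ?D = lead_coeff g * cf n h c" .
  show "lead n (g \<cdot>\<^sub>v h) ?D" unfolding lead_def
  proof (intro conjI allI impI)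
    show "cf n (g \<cdot>\<^sub>v h) ?D \<noteq> 0" using val l g unfolding lead_def by simp
    fix c' assume c': "?D < c'"
    show "cf n (g \<cdot>\<^sub>v h) c' = 0" unfolding cf_smult[OF h n]
      by (rule sum.neutral) (use term0 c' in auto)
  qed
qed




lemma cf_zero: "n > 0 \<Longrightarrow> cf n (0\<^sub>v n :: 'k::zero poly vec) c = 0"
  unfolding cf_def by simp

lemma cf_minus:
  assumes "h \<in> carrier_vec n" "w \<in> carrier_vec n" "n > 0"
  shows "cf n (h - w) c = cf n h c - cf n (w :: 'k::ab_group_add poly vec) c"
  unfolding cf_def using assms by simp

lemma syz_carrier: "h \<in> syz a \<Longrightarrow> h \<in> carrier_vec (dim_vec a)"
  unfolding syz_def by simp

lemma syz_minus_smult: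
  fixes a :: "'k::field poly vec"
  assumes h: "h \<in> syz a" and u: "u \<in> syz a"
  shows "h - t \<cdot>\<^sub>v u \<in> syz a"
proof -
  have hc: "h \<in> carrier_vec (dim_vec a)" and uc: "u \<in> carrier_vec (dim_vec a)"
    using h u by (auto simp: syz_def)
  have "a \<bullet> (h - t \<cdot>\<^sub>v u) = a \<bullet> h - a \<bullet> (t \<cdot>\<^sub>v u)"
    by (rule scalar_prod_minus_distrib[of _ "dim_vec a"]) (use hc uc in auto)
  also have "a \<bullet> (t \<cdot>\<^sub>v u) = t * (a \<bullet> u)" using uc by simp
  finally have "a \<bullet> (h - t \<cdot>\<^sub>v u) = 0" using h u by (simp add: syz_def)
  thus ?thesis using hc uc by (simp add: syz_def)
qed

lemma LV_eq:
  fixes h :: "'k::field poly vec"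
  assumes h: "h \<in> carrier_vec n" and l: "lead n h c" and n: "n > 0" and i: "i < n"
  shows "LV h $ i = cf n h ((c div n) * n + i)"
  using lead_vdeg[OF h l n] h i n unfolding LV_def by (simp add: cf_kr)

lemma abstract_mu:
  fixes a :: "'k::field poly vec" and u :: "nat \<Rightarrow> 'k poly vec" and q :: "nat \<Rightarrow> nat"
  assumes n1: "dim_vec a > 1"
  and U1: "\<And>j. j < dim_vec a - 1 \<Longrightarrow> u j \<in> syz a"
  and U2: "\<And>j. j < dim_vec a - 1 \<Longrightarrow> lead (dim_vec a) (u j) (q j) \<and> cf (dim_vec a) (u j) (q j) = 1"
  and U3: "\<And>i j. i < dim_vec a - 1 \<Longrightarrow> j < dim_vec a - 1 \<Longrightarrow> q i mod dim_vec a = q j mod dim_vec a \<Longrightarrow> i = j"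
  and U4: "\<And>h c. h \<in> syz a \<Longrightarrow> lead (dim_vec a) h c \<Longrightarrow> \<exists>j < dim_vec a - 1. q j mod dim_vec a = c mod dim_vec a \<and> q j \<le> c"
  shows "is_mu_basis a u"
proof -
  define n where "n = dim_vec a"
  have n: "n > 0" using n1 n_def by simp
  note U1 = U1[folded n_def] and U2 = U2[folded n_def] and U3 = U3[folded n_def] and U4 = U4[folded n_def]
  have uc: "u j \<in> carrier_vec n" if "j < n - 1" for j using syz_carrier[OF U1[OF that]] n_def by simp
  have P1: "inj_on u {..<n-1}"
  proof (rule inj_onI)
    fix i j assume i: "i \<in> {..<n-1}" and j: "j \<in> {..<n-1}" and e: "u i = u j"
    from U2[of i] U2[of j] i j e have "q i = q j" using lead_unique by auto
    thus "i = j" using U3[of i j] i j by auto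
  qed
  have P2: "\<forall>j<n-1. u j \<in> carrier_vec n \<and> u j \<noteq> 0\<^sub>v n"
  proof (intro allI impI conjI)
    fix j assume j: "j < n - 1"
    show "u j \<in> carrier_vec n" using uc[OF j] .
    show "u j \<noteq> 0\<^sub>v n"
    proof
      assume "u j = 0\<^sub>v n"
      hence "cf n (u j) (q j) = 0" using cf_zero[OF n] by simp
      thus False using U2[OF j] by simp
    qed
  qed
  have LVc: "LV (u j) \<in> carrier_vec n" if "j < n - 1" for j
    using uc[OF that] unfolding LV_def carrier_vec_def by simp
  have ud: "dim_vec (u j) = n" if "j < n - 1" for j using uc[OF that] by (rule carrier_vecD)
  have LVd: "dim_vec (LV (u j)) = n" if "j < n - 1" for j using LVc[OF that] by (rule carrier_vecD)
  have P3: "\<forall>g::nat \<Rightarrow> 'k. finsum_vec TYPE('k) n (\<lambda>j. g j \<cdot>\<^sub>v LV (u j)) {..<n-1} = 0\<^sub>v n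
        \<longrightarrow> (\<forall>j<n-1. g j = 0)"
  proof (rule allI, rule impI)
    fix g :: "nat \<Rightarrow> 'k"
    assume A0: "finsum_vec TYPE('k) n (\<lambda>j. g j \<cdot>\<^sub>v LV (u j)) {..<n-1} = 0\<^sub>v n"
    have eq: "finsum_vec TYPE('k) n (\<lambda>j. g j \<cdot>\<^sub>v LV (u j)) {..<n-1}
       = vec n (\<lambda>i. \<Sum>j\<in>{..<n-1}. (g j \<cdot>\<^sub>v LV (u j)) $ i)"
      by (rule finsum_vec_eq) (use uc LVc in auto)
    have V0: "vec n (\<lambda>i. \<Sum>j\<in>{..<n-1}. (g j \<cdot>\<^sub>v LV (u j)) $ i) = 0\<^sub>v n"
      unfolding eq[symmetric] by (rule A0)
    have comp: "(\<Sum>j\<in>{..<n-1}. g j * LV (u j) $ i) = 0" if i: "i < n" for i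
    proof -
      have "(\<Sum>j\<in>{..<n-1}. g j * LV (u j) $ i) = (\<Sum>j\<in>{..<n-1}. (g j \<cdot>\<^sub>v LV (u j)) $ i)"
      proof (rule sum.cong[OF refl])
        fix j assume "j \<in> {..<n-1}"
        hence "i < dim_vec (LV (u j))" using LVd i by simp
        thus "g j * LV (u j) $ i = (g j \<cdot>\<^sub>v LV (u j)) $ i" by simp
      qed
      also have "\<dots> = vec n (\<lambda>i. \<Sum>j\<in>{..<n-1}. (g j \<cdot>\<^sub>v LV (u j)) $ i) $ i" using i by simp
      also have "\<dots> = 0" unfolding V0 using i by simp
      finally show ?thesis .
    qed
    show "\<forall>j<n-1. g j = 0"
    proof (rule ccontr)
      assume "\<not> (\<forall>j<n-1. g j = 0)"
      define S where "S = {j. j < n - 1 \<and> g j \<noteq> 0}"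
      have Sne: "S \<noteq> {}" and Sfin: "finite S" using \<open>\<not> _\<close> by (auto simp: S_def)
      define m where "m = Max ((\<lambda>j. q j mod n) ` S)"
      have "m \<in> (\<lambda>j. q j mod n) ` S" unfolding m_def by (rule Max_in) (use Sne Sfin in auto)
      then obtain j0 where j0: "j0 \<in> S" "q j0 mod n = m" by auto
      have mx: "q j mod n \<le> m" if "j \<in> S" for j unfolding m_def
        by (rule Max_ge) (use Sfin that in auto)
      have j0n: "j0 < n - 1" and gj0: "g j0 \<noteq> 0" using j0 by (auto simp: S_def)
      have mn: "m < n" using j0 n by auto
      have "(\<Sum>j\<in>{..<n-1}. g j * LV (u j) $ m) = g j0 * LV (u j0) $ m"
      proof (rule sum_single)
        fix j assume j: "j \<in> {..<n-1}" "j \<noteq> j0"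
        show "g j * LV (u j) $ m = 0"
        proof (cases "g j = 0")
          case False
          hence jS: "j \<in> S" using j by (auto simp: S_def)
          have "q j mod n \<noteq> m" using U3[of j j0] j j0 j0n by auto
          with mx[OF jS] have lt: "q j mod n < m" by simp
          have "LV (u j) $ m = cf n (u j) (q j div n * n + m)"
            by (rule LV_eq[OF uc _ n mn]) (use U2 j in auto)
          also have "\<dots> = 0"
          proof -
            have "q j < q j div n * n + m" using lt div_mult_mod_eq[of "q j" n] by linarith
            thus ?thesis using U2[of j] j unfolding lead_def by auto
          qed
          finally show ?thesis by simp
        qed simp
      qed (use j0n in auto)
      also have "LV (u j0) $ m = cf n (u j0) (q j0 div n * n + m)"
        by (rule LV_eq[OF uc[OF j0n] _ n mn]) (use U2 j0n in auto)
      also have "q j0 div n * n + m = q j0" using j0(2) div_mult_mod_eq[of "q j0" n] by simp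
      finally have "(\<Sum>j\<in>{..<n-1}. g j * LV (u j) $ m) = g j0" using U2[OF j0n] by simp
      with comp[OF mn] gj0 show False by simp
    qed
  qed
  have P4: "\<forall>j<n-1. u j \<in> syz a" using U1 by auto
  have fs: "finsum_vec TYPE('k poly) n (\<lambda>j. g j \<cdot>\<^sub>v u j) {..<n-1}
      = vec n (\<lambda>i. \<Sum>j\<in>{..<n-1}. g j * u j $ i)" for g
  proof -
    have "finsum_vec TYPE('k poly) n (\<lambda>j. g j \<cdot>\<^sub>v u j) {..<n-1}
       = vec n (\<lambda>i. \<Sum>j\<in>{..<n-1}. (g j \<cdot>\<^sub>v u j) $ i)"
      by (rule finsum_vec_eq) (use uc in auto)
    also have "\<dots> = vec n (\<lambda>i. \<Sum>j\<in>{..<n-1}. g j * u j $ i)"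
      by (rule eq_vecI) (use ud in auto)
    finally show ?thesis .
  qed
  have gen: "\<forall>h\<in>syz a. lead n h c \<longrightarrow> (\<exists>g. \<forall>i<n. h $ i = (\<Sum>j\<in>{..<n-1}. g j * u j $ i))" for c
  proof (induction c rule: less_induct)
    case (less c)
    show ?case
    proof (intro ballI impI)
      fix h assume h: "h \<in> syz a" and l: "lead n h c"
      have hc: "h \<in> carrier_vec n" using syz_carrier[OF h] n_def by simp
      obtain j where j: "j < n - 1" "q j mod n = c mod n" "q j \<le> c" using U4[OF h l] by blast
      define e where "e = c div n - q j div n"
      define t where "t = monom (cf n h c) e"
      have cfh: "cf n h c \<noteq> 0" using l unfolding lead_def by simp
      hence t0: "t \<noteq> 0" and dt: "degree t = e" and lct: "lead_coeff t = cf n h c"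
        unfolding t_def by (auto simp: degree_monom_eq)
      have ce: "e * n + q j = c"
      proof -
        have "q j div n \<le> c div n" using j(3) by (rule div_le_mono)
        hence "e * n + q j div n * n = c div n * n" unfolding e_def
          by (simp add: diff_mult_distrib)
        moreover have "q j = q j div n * n + c mod n" using j(2) div_mult_mod_eq[of "q j" n] by simp
        moreover have "c = c div n * n + c mod n" by simp
        ultimately show ?thesis by linarith
      qed
      define w where "w = t \<cdot>\<^sub>v u j"
      have wc: "w \<in> carrier_vec n" using uc[OF j(1)] unfolding w_def by simp
      have lw: "lead n w c" and cw: "cf n w c = cf n h c"
        using lead_smult[OF uc[OF j(1)] n _ t0, of "q j"] U2[OF j(1)] unfolding dt lct ce w_def
        by (auto simp: t_def)
      define h' where "h' = h - w"
      have h'syz: "h' \<in> syz a" unfolding h'_def w_def by (rule syz_minus_smult[OF h U1[OF j(1)]])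
      have h'c: "h' \<in> carrier_vec n" unfolding h'_def using hc wc by simp
      have cfh': "cf n h' c' = cf n h c' - cf n w c'" for c'
        unfolding h'_def by (rule cf_minus[OF hc wc n])
      have small: "cf n h' c' = 0" if "c' \<ge> c" for c'
      proof (cases "c' = c")
        case True thus ?thesis using cfh' cw by simp
      next
        case False hence "c' > c" using that by simp
        thus ?thesis using cfh' l lw unfolding lead_def by simp
      qed
      have hw: "h $ i = h' $ i + t * u j $ i" if "i < n" for i
        using that hc wc uc[OF j(1)] unfolding h'_def w_def by simp
      show "\<exists>g. \<forall>i<n. h $ i = (\<Sum>j\<in>{..<n-1}. g j * u j $ i)"
      proof (cases "h' = 0\<^sub>v n")
        case True
        show ?thesis
        proof (intro exI allI impI)
          fix i assume i: "i < n"
          have "(\<Sum>j'\<in>{..<n-1}. (if j' = j then t else 0) * u j' $ i) = t * u j $ i"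
            by (rule trans[OF sum_single[of _ j]]) (use j(1) in auto)
          thus "h $ i = (\<Sum>j'\<in>{..<n-1}. (if j' = j then t else 0) * u j' $ i)"
            using hw[OF i] True i by simp
        qed
      next
        case False
        then obtain c' where l': "lead n h' c'" using lead_exists[OF h'c] by blast
        have "c' < c"
        proof (rule ccontr)
          assume "\<not> c' < c" thus False using small[of c'] l' unfolding lead_def by simp
        qed
        from less[OF this] h'syz l' obtain g' where
          g': "\<forall>i<n. h' $ i = (\<Sum>j\<in>{..<n-1}. g' j * u j $ i)" by blast
        show ?thesis
        proof (intro exI allI impI)
          fix i assume i: "i < n"
          have "(\<Sum>j'\<in>{..<n-1}. (g' j' + (if j' = j then t else 0)) * u j' $ i)
             = (\<Sum>j'\<in>{..<n-1}. g' j' * u j' $ i) + (\<Sum>j'\<in>{..<n-1}. (if j' = j then t else 0) * u j' $ i)"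
            by (simp add: distrib_right sum.distrib)
          also have "(\<Sum>j'\<in>{..<n-1}. (if j' = j then t else 0) * u j' $ i) = t * u j $ i"
            by (rule trans[OF sum_single[of _ j]]) (use j(1) in auto)
          finally show "h $ i = (\<Sum>j'\<in>{..<n-1}. (g' j' + (if j' = j then t else 0)) * u j' $ i)"
            using hw[OF i] g' i by simp
        qed
      qed
    qed
  qed
  have P5: "\<forall>h \<in> syz a. \<exists>g::nat \<Rightarrow> 'k poly.
        h = finsum_vec TYPE('k poly) n (\<lambda>j. g j \<cdot>\<^sub>v u j) {..<n-1}"
  proof
    fix h assume h: "h \<in> syz a"
    have hc: "h \<in> carrier_vec n" using syz_carrier[OF h] n_def by simp
    have "\<exists>g. \<forall>i<n. h $ i = (\<Sum>j\<in>{..<n-1}. g j * u j $ i)"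
    proof (cases "h = 0\<^sub>v n")
      case True thus ?thesis by (intro exI[of _ "\<lambda>_. 0"]) auto
    next
      case False
      then obtain c where "lead n h c" using lead_exists[OF hc] by blast
      thus ?thesis using gen h by blast
    qed
    then obtain g where g: "\<forall>i<n. h $ i = (\<Sum>j\<in>{..<n-1}. g j * u j $ i)" by blast
    have "h = finsum_vec TYPE('k poly) n (\<lambda>j. g j \<cdot>\<^sub>v u j) {..<n-1}"
      unfolding fs by (rule eq_vecI) (use hc g in auto)
    thus "\<exists>g::nat \<Rightarrow> 'k poly. h = finsum_vec TYPE('k poly) n (\<lambda>j. g j \<cdot>\<^sub>v u j) {..<n-1}" by blast
  qed
  have P6: "\<forall>g::nat \<Rightarrow> 'k poly. finsum_vec TYPE('k poly) n (\<lambda>j. g j \<cdot>\<^sub>v u j) {..<n-1} = 0\<^sub>v n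
        \<longrightarrow> (\<forall>j<n-1. g j = 0)"
  proof (rule allI, rule impI)
    fix g :: "nat \<Rightarrow> 'k poly"
    assume "finsum_vec TYPE('k poly) n (\<lambda>j. g j \<cdot>\<^sub>v u j) {..<n-1} = 0\<^sub>v n"
    hence W0: "vec n (\<lambda>i. \<Sum>j\<in>{..<n-1}. g j * u j $ i) = 0\<^sub>v n" unfolding fs .
    show "\<forall>j<n-1. g j = 0"
    proof (rule ccontr)
      assume "\<not> (\<forall>j<n-1. g j = 0)"
      define S where "S = {j. j < n - 1 \<and> g j \<noteq> 0}"
      define \<phi> where "\<phi> j = degree (g j) * n + q j" for j
      have Sne: "S \<noteq> {}" and Sfin: "finite S" using \<open>\<not> _\<close> by (auto simp: S_def)
      define C where "C = Max (\<phi> ` S)"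
      have "C \<in> \<phi> ` S" unfolding C_def by (rule Max_in) (use Sne Sfin in auto)
      then obtain j0 where j0: "j0 \<in> S" "\<phi> j0 = C" by auto
      have mx: "\<phi> j \<le> C" if "j \<in> S" for j unfolding C_def
        by (rule Max_ge) (use Sfin that in auto)
      have j0n: "j0 < n - 1" and gj0: "g j0 \<noteq> 0" using j0 by (auto simp: S_def)
      have phimod: "\<phi> j mod n = q j mod n" for j unfolding \<phi>_def by simp
      have cfW: "cf n (vec n (\<lambda>i. \<Sum>j\<in>{..<n-1}. g j * u j $ i)) C
          = (\<Sum>j\<in>{..<n-1}. cf n (g j \<cdot>\<^sub>v u j) C)"
        unfolding cf_def using n ud by (simp add: coeff_sum)
      also have "\<dots> = cf n (g j0 \<cdot>\<^sub>v u j0) C"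
      proof (rule sum_single)
        fix j assume j: "j \<in> {..<n-1}" "j \<noteq> j0"
        show "cf n (g j \<cdot>\<^sub>v u j) C = 0"
        proof (cases "g j = 0")
          case True thus ?thesis unfolding cf_def using n ud j by simp
        next
          case False
          hence jS: "j \<in> S" using j by (auto simp: S_def)
          have "q j mod n \<noteq> q j0 mod n" using U3[of j j0] j j0n by auto
          hence "\<phi> j \<noteq> C" using j0(2) phimod[of j] phimod[of j0] by auto
          with mx[OF jS] have lt: "\<phi> j < C" by simp
          have "lead n (g j \<cdot>\<^sub>v u j) (\<phi> j)" unfolding \<phi>_def
            by (rule lead_smult[OF uc n _ False]) (use U2 j in auto)
          thus ?thesis using lt unfolding lead_def by auto
        qed
      qed (use j0n in auto)
      also have "\<dots> = lead_coeff (g j0) * cf n (u j0) (q j0)"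
        using lead_smult(2)[OF uc[OF j0n] n _ gj0, of "q j0"] U2[OF j0n] j0(2)
        unfolding \<phi>_def by auto
      also have "\<dots> \<noteq> 0" using U2[OF j0n] gj0 by simp
      finally show False unfolding W0 cf_zero[OF n] by simp
    qed
  qed
  show ?thesis unfolding is_mu_basis_def Let_def n_def[symmetric]
    using P1 P2 P3 P4 P5 P6 by blast
qed




locale musetup =
  fixes a :: "'k::field poly vec"
  assumes n1: "dim_vec a > 1"
begin

abbreviation "n \<equiv> dim_vec a"
abbreviation "d \<equiv> vdeg a"
abbreviation "N \<equiv> n * (d + 1)"

lemma n0: "n > 0" using n1 by simp

lemma A_carrier: "coeff_matrix a \<in> carrier_mat (2*d+1) N"
  unfolding coeff_matrix_def Let_def by simp

lemma A_index: "i < 2*d+1 \<Longrightarrow> c < N \<Longrightarrow> coeff_matrix a $$ (i,c) =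
  (if c div n \<le> i \<and> i - c div n \<le> d then coeff (a $ (c mod n)) (i - c div n) else 0)"
  unfolding coeff_matrix_def Let_def by simp

definition pv :: "'k vec \<Rightarrow> 'k poly vec" where
  "pv x = vec n (\<lambda>r. \<Sum>c<N. if c mod n = r then monom (x $ c) (c div n) else 0)"

lemma pv_carrier: "pv x \<in> carrier_vec n" unfolding pv_def by simp

lemma mod_div_eq_iff: "(c mod n = c' mod n \<and> c div n = c' div n) \<longleftrightarrow> c = (c' :: nat)"
proof
  assume h: "c mod n = c' mod n \<and> c div n = c' div n"
  have "c = c div n * n + c mod n" by simp
  also have "\<dots> = c' div n * n + c' mod n" using h by simp
  also have "\<dots> = c'" by simp
  finally show "c = c'" .
qed simp

lemma cf_pv: "cf n (pv x) c' = (if c' < N then x $ c' else 0)"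
proof -
  have r: "c' mod n < n" using n0 by simp
  have "cf n (pv x) c' = (\<Sum>c<N. coeff (if c mod n = c' mod n then monom (x $ c) (c div n) else 0) (c' div n))"
    unfolding cf_def pv_def using r by (simp add: coeff_sum)
  also have "\<dots> = (\<Sum>c<N. if c = c' then x $ c else 0)"
  proof (rule sum.cong[OF refl])
    fix c
    show "coeff (if c mod n = c' mod n then monom (x $ c) (c div n) else 0) (c' div n) = (if c = c' then x $ c else 0)"
      using mod_div_eq_iff[of c c'] by auto
  qed
  also have "\<dots> = (if c' < N then x $ c' else 0)" by simp
  finally show ?thesis .
qed

lemma pv_cf:
  assumes h: "h \<in> carrier_vec n" and z: "\<And>c. c \<ge> N \<Longrightarrow> cf n h c = 0"
  shows "pv (vec N (cf n h)) = h"
  by (rule cf_eqI[OF pv_carrier h n0]) (use z in \<open>auto simp: cf_pv\<close>)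

lemma coeff_a_zero: "r < n \<Longrightarrow> k > d \<Longrightarrow> coeff (a $ r) k = 0"
  using degree_le_vdeg[of r a] by (intro coeff_eq_0) simp

lemma coeff_dot_pv:
  assumes x: "x \<in> carrier_vec N"
  shows "coeff (a \<bullet> pv x) i = (\<Sum>c<N. if c div n \<le> i \<and> i - c div n \<le> d
      then coeff (a $ (c mod n)) (i - c div n) * x $ c else 0)"
proof -
  have "a \<bullet> pv x = (\<Sum>r\<in>{0..<n}. a $ r * pv x $ r)"
    unfolding scalar_prod_def using pv_carrier[of x] by simp
  also have "\<dots> = (\<Sum>r\<in>{0..<n}. \<Sum>c<N. if c mod n = r then a $ r * monom (x $ c) (c div n) else 0)"
    unfolding pv_def by (simp add: sum_distrib_left if_distrib cong: if_cong)
  also have "\<dots> = (\<Sum>c<N. \<Sum>r\<in>{0..<n}. if c mod n = r then a $ r * monom (x $ c) (c div n) else 0)"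
    by (rule sum.swap)
  also have "\<dots> = (\<Sum>c<N. a $ (c mod n) * monom (x $ c) (c div n))"
    using n0 by simp
  finally have e: "a \<bullet> pv x = (\<Sum>c<N. monom (x $ c) (c div n) * a $ (c mod n))"
    by (simp add: mult.commute)
  show ?thesis unfolding e coeff_sum
  proof (rule sum.cong[OF refl])
    fix c assume "c \<in> {..<N}"
    have r: "c mod n < n" using n0 by simp
    show "coeff (monom (x $ c) (c div n) * a $ (c mod n)) i = (if c div n \<le> i \<and> i - c div n \<le> d
      then coeff (a $ (c mod n)) (i - c div n) * x $ c else 0)"
      unfolding coeff_monom_mult using coeff_a_zero[OF r, of "i - c div n"] by auto
  qed
qed

lemma Ax_index:
  assumes x: "x \<in> carrier_vec N" and i: "i < 2*d+1"
  shows "(coeff_matrix a *\<^sub>v x) $ i = coeff (a \<bullet> pv x) i"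
proof -
  have dr: "dim_row (coeff_matrix a) = 2*d+1" and dc: "dim_col (coeff_matrix a) = N"
    and dx: "dim_vec x = N" using A_carrier x by auto
  have "(coeff_matrix a *\<^sub>v x) $ i = row (coeff_matrix a) i \<bullet> x" using dr i by simp
  also have "\<dots> = (\<Sum>c\<in>{0..<N}. coeff_matrix a $$ (i,c) * x $ c)"
    unfolding scalar_prod_def dx by (rule sum.cong[OF refl]) (use dr dc i in auto)
  also have "\<dots> = (\<Sum>c<N. if c div n \<le> i \<and> i - c div n \<le> d
      then coeff (a $ (c mod n)) (i - c div n) * x $ c else 0)"
    unfolding lessThan_atLeast0 by (rule sum.cong[OF refl]) (use A_index i in auto)
  finally show ?thesis unfolding coeff_dot_pv[OF x] .
qed

lemma coeff_dot_pv_high: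
  assumes x: "x \<in> carrier_vec N" and i: "i \<ge> 2*d+1"
  shows "coeff (a \<bullet> pv x) i = 0"
  unfolding coeff_dot_pv[OF x]
proof (rule sum.neutral, intro ballI)
  fix c assume "c \<in> {..<N}"
  hence "c div n < d + 1" using n0 by (simp add: div_less_iff_less_mult mult.commute)
  thus "(if c div n \<le> i \<and> i - c div n \<le> d then coeff (a $ (c mod n)) (i - c div n) * x $ c else 0) = 0"
    using i by auto
qed

lemma F1:
  assumes x: "x \<in> carrier_vec N"
  shows "coeff_matrix a *\<^sub>v x = 0\<^sub>v (2*d+1) \<longleftrightarrow> a \<bullet> pv x = 0"
proof
  assume h: "coeff_matrix a *\<^sub>v x = 0\<^sub>v (2*d+1)"
  show "a \<bullet> pv x = 0"
  proof (rule poly_eqI)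
    fix i
    show "coeff (a \<bullet> pv x) i = coeff 0 i"
    proof (cases "i < 2*d+1")
      case True
      have "coeff (a \<bullet> pv x) i = (coeff_matrix a *\<^sub>v x) $ i" using Ax_index[OF x True] by simp
      also have "\<dots> = 0" unfolding h using True by simp
      finally show ?thesis by simp
    qed (use coeff_dot_pv_high[OF x] in auto)
  qed
next
  assume h: "a \<bullet> pv x = 0"
  show "coeff_matrix a *\<^sub>v x = 0\<^sub>v (2*d+1)"
    by (rule eq_vecI) (use A_carrier Ax_index[OF x] h in auto)
qed

lemma syz_pv: "x \<in> carrier_vec N \<Longrightarrow> pv x \<in> syz a \<longleftrightarrow> coeff_matrix a *\<^sub>v x = 0\<^sub>v (2*d+1)"
  unfolding syz_def using F1 pv_carrier by auto

end



lemma mult_mat_vec_sum: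
  assumes B: "B \<in> carrier_mat R C" and x: "x \<in> carrier_vec C" and i: "i < R"
  shows "(B *\<^sub>v x) $ i = (\<Sum>j\<in>{0..<C}. B $$ (i,j) * x $ j)"
proof -
  have dr: "dim_row B = R" and dc: "dim_col B = C" and dx: "dim_vec x = C" using B x by auto
  have "(B *\<^sub>v x) $ i = row B i \<bullet> x" using dr i by simp
  also have "\<dots> = (\<Sum>j\<in>{0..<C}. B $$ (i,j) * x $ j)"
    unfolding scalar_prod_def dx by (rule sum.cong[OF refl]) (use dr dc i in auto)
  finally show ?thesis .
qed

lemma sum_lt_restrict:
  fixes c C :: nat
  assumes "c \<le> C"
  shows "(\<Sum>j\<in>{0..<C}. if j < c then g j else 0) = (\<Sum>j<c. g j :: 'a::comm_monoid_add)"
proof -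
  have "(\<Sum>j\<in>{0..<C}. if j < c then g j else 0) = sum g {j \<in> {0..<C}. j < c}"
    by (rule sum.inter_filter[symmetric]) simp
  also have "{j \<in> {0..<C}. j < c} = {..<c}" using assms by auto
  finally show ?thesis .
qed

lemma nonpivotal_iff:
  fixes B :: "'k::field mat"
  assumes B: "B \<in> carrier_mat R C" and c: "c < C"
  shows "(\<exists>f. col B c = finsum_vec TYPE('k) R (\<lambda>c'. f c' \<cdot>\<^sub>v col B c') {..<c}) \<longleftrightarrow>
         (\<exists>x\<in>carrier_vec C. B *\<^sub>v x = 0\<^sub>v R \<and> x $ c \<noteq> 0 \<and> (\<forall>j. c < j \<and> j < C \<longrightarrow> x $ j = 0))"
proof -
  have dr: "dim_row B = R" and dc: "dim_col B = C" using B by auto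
  have fs: "finsum_vec TYPE('k) R (\<lambda>c'. f c' \<cdot>\<^sub>v col B c') {..<c}
     = vec R (\<lambda>i. \<Sum>c'<c. f c' * B $$ (i,c'))" for f
  proof -
    have "finsum_vec TYPE('k) R (\<lambda>c'. f c' \<cdot>\<^sub>v col B c') {..<c}
       = vec R (\<lambda>i. \<Sum>c'\<in>{..<c}. (f c' \<cdot>\<^sub>v col B c') $ i)"
      by (rule finsum_vec_eq) (use dr in auto)
    also have "\<dots> = vec R (\<lambda>i. \<Sum>c'<c. f c' * B $$ (i,c'))"
    proof (rule eq_vecI)
      fix i assume "i < dim_vec (vec R (\<lambda>i. \<Sum>c'<c. f c' * B $$ (i,c')))"
      hence i: "i < R" by simp
      show "vec R (\<lambda>i. \<Sum>c'\<in>{..<c}. (f c' \<cdot>\<^sub>v col B c') $ i) $ i = vec R (\<lambda>i. \<Sum>c'<c. f c' * B $$ (i,c')) $ i"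
        using i by (simp, intro sum.cong[OF refl]) (use dr dc c in auto)
    qed simp
    finally show ?thesis .
  qed
  show ?thesis
  proof
    assume "\<exists>f. col B c = finsum_vec TYPE('k) R (\<lambda>c'. f c' \<cdot>\<^sub>v col B c') {..<c}"
    then obtain f where f: "col B c = vec R (\<lambda>i. \<Sum>c'<c. f c' * B $$ (i,c'))" unfolding fs by blast
    define x where "x = vec C (\<lambda>j. (if j < c then f j else 0) - (if j = c then 1 else 0))"
    have xc: "x \<in> carrier_vec C" unfolding x_def by simp
    have "B *\<^sub>v x = 0\<^sub>v R"
    proof (rule eq_vecI)
      fix i assume "i < dim_vec (0\<^sub>v R :: 'k vec)"
      hence i: "i < R" by simp
      have "(B *\<^sub>v x) $ i = (\<Sum>j\<in>{0..<C}. B $$ (i,j) * x $ j)" by (rule mult_mat_vec_sum[OF B xc i])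
      also have "\<dots> = (\<Sum>j\<in>{0..<C}. (if j < c then B $$ (i,j) * f j else 0) - (if j = c then B $$ (i,j) else 0))"
        unfolding x_def by (rule sum.cong[OF refl]) (auto simp: algebra_simps)
      also have "\<dots> = (\<Sum>j<c. B $$ (i,j) * f j) - B $$ (i,c)"
        unfolding sum_subtractf sum_lt_restrict[OF less_imp_le[OF c]] using c by simp
      also have "B $$ (i,c) = (\<Sum>c'<c. f c' * B $$ (i,c'))"
        using arg_cong[OF f, of "\<lambda>v. v $ i"] i dr dc c by simp
      finally show "(B *\<^sub>v x) $ i = 0\<^sub>v R $ i" using i by (simp add: mult.commute)
    qed (use dr in simp)
    moreover have "x $ c \<noteq> 0" unfolding x_def using c by simp
    moreover have "\<forall>j. c < j \<and> j < C \<longrightarrow> x $ j = 0" unfolding x_def by auto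
    ultimately show "\<exists>x\<in>carrier_vec C. B *\<^sub>v x = 0\<^sub>v R \<and> x $ c \<noteq> 0 \<and> (\<forall>j. c < j \<and> j < C \<longrightarrow> x $ j = 0)"
      using xc by blast
  next
    assume "\<exists>x\<in>carrier_vec C. B *\<^sub>v x = 0\<^sub>v R \<and> x $ c \<noteq> 0 \<and> (\<forall>j. c < j \<and> j < C \<longrightarrow> x $ j = 0)"
    then obtain x where xc: "x \<in> carrier_vec C" and Bx: "B *\<^sub>v x = 0\<^sub>v R" and x0: "x $ c \<noteq> 0"
      and xz: "\<And>j. c < j \<Longrightarrow> j < C \<Longrightarrow> x $ j = 0" by blast
    define f where "f j = - x $ j / x $ c" for j
    have "col B c = vec R (\<lambda>i. \<Sum>c'<c. f c' * B $$ (i,c'))"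
    proof (rule eq_vecI)
      fix i assume "i < dim_vec (vec R (\<lambda>i. \<Sum>c'<c. f c' * B $$ (i,c')))"
      hence i: "i < R" by simp
      have "0 = (B *\<^sub>v x) $ i" unfolding Bx using i by simp
      also have "\<dots> = (\<Sum>j\<in>{0..<C}. B $$ (i,j) * x $ j)" by (rule mult_mat_vec_sum[OF B xc i])
      also have "\<dots> = (\<Sum>j\<in>{0..<C}. (if j < c then B $$ (i,j) * x $ j else 0) + (if j = c then B $$ (i,j) * x $ j else 0))"
        by (rule sum.cong[OF refl]) (use xz in auto)
      also have "\<dots> = (\<Sum>j<c. B $$ (i,j) * x $ j) + B $$ (i,c) * x $ c"
        unfolding sum.distrib sum_lt_restrict[OF less_imp_le[OF c]] using c by simp
      finally have eq: "B $$ (i,c) = - (\<Sum>j<c. B $$ (i,j) * x $ j) / x $ c"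
        using x0 by (simp add: field_simps eq_neg_iff_add_eq_0)
      have "(\<Sum>c'<c. f c' * B $$ (i,c')) = - (\<Sum>j<c. B $$ (i,j) * x $ j) / x $ c"
        unfolding f_def by (simp add: sum_divide_distrib[symmetric] sum_negf mult.commute)
      thus "col B c $ i = vec R (\<lambda>i. \<Sum>c'<c. f c' * B $$ (i,c')) $ i"
        using eq i dr dc c by simp
    qed (use dr in simp)
    thus "\<exists>f. col B c = finsum_vec TYPE('k) R (\<lambda>c'. f c' \<cdot>\<^sub>v col B c') {..<c}"
      unfolding fs by blast
  qed
qed




lemma pf_prefix:
  assumes dim: "dim_row E = R" and p: "pivot_fun E f C"
  shows "j < R \<Longrightarrow> f j < C \<Longrightarrow> i \<le> j \<Longrightarrow> f i < C"
proof (induction j)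
  case 0 thus ?case by simp
next
  case (Suc j)
  show ?case
  proof (cases "i = Suc j")
    case False
    hence ij: "i \<le> j" using Suc.prems by simp
    have "f (Suc j) > f j \<or> f (Suc j) = C" using pivot_funD(3)[OF dim p, of j] Suc.prems by simp
    hence "f j < C" using Suc.prems by auto
    thus ?thesis using Suc.IH Suc.prems ij by simp
  qed (use Suc.prems in simp)
qed

lemma pf_mono:
  assumes dim: "dim_row E = R" and p: "pivot_fun E f C"
  shows "i < j \<Longrightarrow> j < R \<Longrightarrow> f j < C \<Longrightarrow> f i < f j"
proof (induction j)
  case 0 thus ?case by simp
next
  case (Suc j)
  have "f (Suc j) > f j \<or> f (Suc j) = C" using pivot_funD(3)[OF dim p, of j] Suc.prems by simp
  hence lt: "f j < f (Suc j)" using Suc.prems by auto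
  show ?case
  proof (cases "i = j")
    case False
    hence "i < j" using Suc.prems by simp
    hence "f i < f j" using Suc.IH Suc.prems lt by simp
    thus ?thesis using lt by simp
  qed (use lt in simp)
qed

lemma pivot_col_no_lead:
  fixes E :: "'k::field mat"
  assumes E: "E \<in> carrier_mat R C" and p: "pivot_fun E f C" and i: "i < R" "f i < C"
    and x: "x \<in> carrier_vec C" and Ex: "E *\<^sub>v x = 0\<^sub>v R"
    and z: "\<And>j. f i < j \<Longrightarrow> j < C \<Longrightarrow> x $ j = 0"
  shows "x $ f i = 0"
proof -
  have dim: "dim_row E = R" using E by simp
  have "0 = (E *\<^sub>v x) $ i" unfolding Ex using i by simp
  also have "\<dots> = (\<Sum>j\<in>{0..<C}. E $$ (i,j) * x $ j)" by (rule mult_mat_vec_sum[OF E x i(1)])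
  also have "\<dots> = E $$ (i, f i) * x $ f i"
  proof (rule sum_single)
    fix j assume j: "j \<in> {0..<C}" "j \<noteq> f i"
    show "E $$ (i,j) * x $ j = 0"
    proof (cases "j < f i")
      case True thus ?thesis using pivot_funD(2)[OF dim p i(1) True] by simp
    next
      case False hence "f i < j" using j by simp
      thus ?thesis using z j by simp
    qed
  qed (use i in auto)
  also have "E $$ (i, f i) = 1" using pivot_funD(4)[OF dim p i] .
  finally show ?thesis by simp
qed

lemma nonpivot_vec:
  fixes E :: "'k::field mat"
  assumes E: "E \<in> carrier_mat R C" and p: "pivot_fun E f C"
    and K1: "\<And>i. i < K \<Longrightarrow> i < R \<and> f i < C"
    and K2: "\<And>i. i < R \<Longrightarrow> K \<le> i \<Longrightarrow> f i = C"
    and c: "c < C" and nc: "\<And>i. i < K \<Longrightarrow> f i \<noteq> c"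
  defines "xc \<equiv> vec C (\<lambda>j. (if j = c then 1 else 0) - (\<Sum>i<K. if f i = j then E $$ (i,c) else 0))"
  shows "E *\<^sub>v xc = 0\<^sub>v R" "xc $ c = 1" "\<And>j. c < j \<Longrightarrow> j < C \<Longrightarrow> xc $ j = 0"
proof -
  have dim: "dim_row E = R" using E by simp
  have xcc: "xc \<in> carrier_vec C" unfolding xc_def by simp
  show "xc $ c = 1" unfolding xc_def using c nc by (simp add: sum.neutral)
  show "xc $ j = 0" if j: "c < j" "j < C" for j
  proof -
    have "(\<Sum>i<K. if f i = j then E $$ (i,c) else 0) = 0"
    proof (rule sum.neutral, intro ballI)
      fix i assume "i \<in> {..<K}"
      hence i: "i < K" by simp
      show "(if f i = j then E $$ (i,c) else 0) = 0"
      proof (cases "f i = j")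
        case True
        hence "c < f i" using j by simp
        thus ?thesis using pivot_funD(2)[OF dim p, of i c] K1[OF i] by simp
      qed simp
    qed
    thus ?thesis unfolding xc_def using j by simp
  qed
  show "E *\<^sub>v xc = 0\<^sub>v R"
  proof (rule eq_vecI)
    fix i' assume "i' < dim_vec (0\<^sub>v R :: 'k vec)"
    hence i': "i' < R" by simp
    have "(E *\<^sub>v xc) $ i' = (\<Sum>j\<in>{0..<C}. E $$ (i',j) * xc $ j)" by (rule mult_mat_vec_sum[OF E xcc i'])
    also have "\<dots> = 0"
    proof (cases "i' < K")
      case False
      hence fi: "f i' = C" using K2 i' by simp
      show ?thesis
        by (rule sum.neutral) (use pivot_funD(2)[OF dim p i'] fi in auto)
    next
      case True
      have "(\<Sum>j\<in>{0..<C}. E $$ (i',j) * xc $ j)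
         = (\<Sum>j\<in>{0..<C}. (if j = c then E $$ (i',j) else 0)
              - (\<Sum>i<K. if f i = j then E $$ (i',j) * E $$ (i,c) else 0))"
        unfolding xc_def by (rule sum.cong[OF refl])
          (simp add: right_diff_distrib sum_distrib_left if_distrib cong: if_cong)
      also have "\<dots> = E $$ (i',c) - (\<Sum>j\<in>{0..<C}. \<Sum>i<K. if f i = j then E $$ (i',j) * E $$ (i,c) else 0)"
        unfolding sum_subtractf using c by simp
      also have "(\<Sum>j\<in>{0..<C}. \<Sum>i<K. if f i = j then E $$ (i',j) * E $$ (i,c) else 0)
          = (\<Sum>i<K. \<Sum>j\<in>{0..<C}. if f i = j then E $$ (i',j) * E $$ (i,c) else 0)"
        by (rule sum.swap)
      also have "\<dots> = (\<Sum>i<K. E $$ (i', f i) * E $$ (i,c))"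
        by (rule sum.cong[OF refl]) (use K1 in auto)
      also have "\<dots> = E $$ (i', f i') * E $$ (i',c)"
      proof (rule sum_single)
        fix i assume "i \<in> {..<K}" "i \<noteq> i'"
        thus "E $$ (i', f i) * E $$ (i,c) = 0"
          using pivot_funD(5)[OF dim p, of i i'] K1 i' by auto
      qed (use True in auto)
      also have "E $$ (i', f i') = 1" using pivot_funD(4)[OF dim p i'] K1[OF True] by simp
      finally show ?thesis by simp
    qed
    finally show "(E *\<^sub>v xc) $ i' = 0\<^sub>v R $ i'" using i' by simp
  qed (use dim in simp)
qed




context musetup
begin

abbreviation "AA \<equiv> coeff_matrix a"

definition "EE = gauss_jordan_single AA"

lemma EE_carrier: "EE \<in> carrier_mat (2*d+1) N"
  using gauss_jordan_single(2)[OF A_carrier] unfolding EE_def by simp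

lemma ker_eq: "x \<in> carrier_vec N \<Longrightarrow> (AA *\<^sub>v x = 0\<^sub>v (2*d+1)) = (EE *\<^sub>v x = 0\<^sub>v (2*d+1))"
  using gauss_jordan_single(1)[OF A_carrier refl] unfolding EE_def by simp

definition "pf = (SOME f. pivot_fun EE f N)"

lemma pf: "pivot_fun EE pf N"
proof -
  have "row_echelon_form EE" using gauss_jordan_single(3)[OF A_carrier refl] unfolding EE_def by simp
  hence "\<exists>f. pivot_fun EE f N" unfolding row_echelon_form_def using EE_carrier by simp
  thus ?thesis unfolding pf_def by (rule someI_ex)
qed

lemma EE_dim: "dim_row EE = 2*d+1" using EE_carrier by simp

definition "K = (LEAST i. \<not> (i < 2*d+1 \<and> pf i < N))"

lemma K1: "i < K \<Longrightarrow> i < 2*d+1 \<and> pf i < N"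
  unfolding K_def using not_less_Least by blast

lemma K_notP: "\<not> (K < 2*d+1 \<and> pf K < N)"
  unfolding K_def by (rule LeastI[of _ "2*d+1"]) simp

lemma K2: "i < 2*d+1 \<Longrightarrow> K \<le> i \<Longrightarrow> pf i = N"
proof -
  assume i: "i < 2*d+1" and Ki: "K \<le> i"
  have le: "pf i \<le> N" using pivot_funD(1)[OF EE_dim pf i] .
  show "pf i = N"
  proof (rule ccontr)
    assume "pf i \<noteq> N"
    hence "pf i < N" using le by simp
    hence "pf K < N" using pf_prefix[OF EE_dim pf i] Ki by simp
    thus False using K_notP Ki i by simp
  qed
qed

lemma pf_mono': "i < j \<Longrightarrow> j < K \<Longrightarrow> pf i < pf j"
  using pf_mono[OF EE_dim pf] K1 by blast

lemma nonpiv_iff: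
  "c \<in> nonpivots AA \<longleftrightarrow> c < N \<and>
     (\<exists>x\<in>carrier_vec N. AA *\<^sub>v x = 0\<^sub>v (2*d+1) \<and> x $ c \<noteq> 0 \<and> (\<forall>j. c < j \<and> j < N \<longrightarrow> x $ j = 0))"
proof -
  have dr: "dim_row AA = 2*d+1" and dc: "dim_col AA = N" using A_carrier by auto
  show ?thesis
    unfolding nonpivots_def pivotal_def dc dr using nonpivotal_iff[OF A_carrier] by auto
qed

lemma pivotal_iff: "pivotal AA c \<longleftrightarrow> (\<exists>i<K. pf i = c)"
proof
  assume pv: "pivotal AA c"
  have c: "c < N" using pv A_carrier unfolding pivotal_def by simp
  show "\<exists>i<K. pf i = c"
  proof (rule ccontr)
    assume nc: "\<not> (\<exists>i<K. pf i = c)"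
    define xc where "xc = vec N (\<lambda>j. (if j = c then 1 else 0) - (\<Sum>i<K. if pf i = j then EE $$ (i,c) else 0))"
    have props: "EE *\<^sub>v xc = 0\<^sub>v (2*d+1)" "xc $ c = 1" "\<And>j. c < j \<Longrightarrow> j < N \<Longrightarrow> xc $ j = 0"
      using nonpivot_vec[OF EE_carrier pf K1 K2 c] nc unfolding xc_def by auto
    have xcc: "xc \<in> carrier_vec N" unfolding xc_def by simp
    have "c \<in> nonpivots AA" unfolding nonpiv_iff
      using c xcc props ker_eq[OF xcc] by auto
    thus False using pv unfolding nonpivots_def by simp
  qed
next
  assume "\<exists>i<K. pf i = c"
  then obtain i where i: "i < K" "pf i = c" by blast
  have c: "c < N" using K1[OF i(1)] i by simp
  have "c \<notin> nonpivots AA"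
  proof
    assume "c \<in> nonpivots AA"
    then obtain x where x: "x \<in> carrier_vec N" "AA *\<^sub>v x = 0\<^sub>v (2*d+1)" "x $ c \<noteq> 0"
      "\<And>j. c < j \<Longrightarrow> j < N \<Longrightarrow> x $ j = 0" unfolding nonpiv_iff by blast
    have "x $ pf i = 0"
      by (rule pivot_col_no_lead[OF EE_carrier pf _ _ x(1)]) (use K1[OF i(1)] x ker_eq[OF x(1)] i in auto)
    thus False using x(3) i by simp
  qed
  thus "pivotal AA c" unfolding nonpivots_def using c A_carrier by auto
qed

lemma pivots_eq: "pivots AA = map pf [0..<K]"
proof -
  have set: "{c. pivotal AA c} = set (map pf [0..<K])" unfolding pivotal_iff by auto
  have sw: "sorted_wrt (<) (map pf [0..<K])"
    unfolding sorted_wrt_iff_nth_less using pf_mono' by auto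
  hence "sorted (map pf [0..<K])" "distinct (map pf [0..<K])" unfolding strict_sorted_iff by auto
  thus ?thesis unfolding pivots_def set sorted_list_of_set_sort_remdups
    by (simp add: distinct_remdups_id sorted_sort_id)
qed

end



locale musetup2 = musetup +
  assumes anz: "a \<noteq> 0\<^sub>v (dim_vec a)"
begin

lemma syz_lead_np:
  assumes h: "h \<in> syz a" and l: "lead n h c" and c: "c < N"
  shows "c \<in> nonpivots AA"
proof -
  have hc: "h \<in> carrier_vec n" using syz_carrier[OF h] .
  define x where "x = vec N (cf n h)"
  have xc: "x \<in> carrier_vec N" unfolding x_def by simp
  have z: "cf n h c' = 0" if "c' \<ge> N" for c' using l that c unfolding lead_def by simp
  have "pv x = h" unfolding x_def by (rule pv_cf[OF hc z])
  hence Ax: "AA *\<^sub>v x = 0\<^sub>v (2*d+1)" using syz_pv[OF xc] h by simp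
  show ?thesis unfolding nonpiv_iff
    using c xc Ax l unfolding x_def lead_def by auto
qed

lemma np_syz_lead:
  assumes c: "c \<in> nonpivots AA"
  shows "\<exists>h\<in>syz a. lead n h c"
proof -
  obtain x where x: "x \<in> carrier_vec N" "AA *\<^sub>v x = 0\<^sub>v (2*d+1)" "x $ c \<noteq> 0"
      "\<And>j. c < j \<Longrightarrow> j < N \<Longrightarrow> x $ j = 0" and cN: "c < N"
    using c unfolding nonpiv_iff by blast
  have "pv x \<in> syz a" using syz_pv[OF x(1)] x(2) by simp
  moreover have "lead n (pv x) c" unfolding lead_def cf_pv using x cN by auto
  ultimately show ?thesis by blast
qed

lemma exists_mm: "\<exists>r<n. a $ r \<noteq> 0 \<and> degree (a $ r) = d"
proof -
  obtain r0 where r0: "r0 < n" "a $ r0 \<noteq> 0" using anz by (auto simp: vec_eq_iff)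
  show ?thesis
  proof (cases "d = 0")
    case True
    thus ?thesis using r0 degree_le_vdeg[of r0 a] by auto
  next
    case False
    have "d \<in> insert 0 {degree (a $ i) |i. i < n}" unfolding vdeg_def by (rule Max_in) auto
    with False obtain i where i: "i < n" "degree (a $ i) = d" by auto
    hence "a $ i \<noteq> 0" using False by auto
    thus ?thesis using i by blast
  qed
qed

definition "mm = (LEAST r. r < n \<and> a $ r \<noteq> 0 \<and> degree (a $ r) = d)"

lemma mm: "mm < n" "a $ mm \<noteq> 0" "degree (a $ mm) = d"
  using LeastI_ex[OF exists_mm] unfolding mm_def by auto

lemma mm_min: "r < mm \<Longrightarrow> a $ r = 0 \<or> degree (a $ r) < d"
proof -
  assume r: "r < mm"
  hence rn: "r < n" using mm(1) by simp
  have "\<not> (r < n \<and> a $ r \<noteq> 0 \<and> degree (a $ r) = d)" using not_less_Least[OF r[unfolded mm_def]] .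
  thus ?thesis using degree_le_vdeg[of r a] rn by auto
qed

lemma no_lead_mm:
  assumes h: "h \<in> syz a" and l: "lead n h c"
  shows "c mod n \<noteq> mm"
proof
  assume cm: "c mod n = mm"
  have hc: "h \<in> carrier_vec n" using syz_carrier[OF h] .
  define k where "k = c div n"
  have ckm: "c = k * n + mm" unfolding k_def using cm div_mult_mod_eq[of c n] by linarith
  have term0: "coeff (a $ r) i * coeff (h $ r) (d + k - i) = 0"
    if r: "r < n" and i: "i \<le> d + k" and ne: "r \<noteq> mm \<or> i \<noteq> d" for r i
  proof (rule ccontr)
    assume "coeff (a $ r) i * coeff (h $ r) (d + k - i) \<noteq> 0"
    hence a0: "coeff (a $ r) i \<noteq> 0" and h0: "coeff (h $ r) (d + k - i) \<noteq> 0" by auto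
    have ir: "i \<le> degree (a $ r)" using a0 by (rule le_degree)
    have id: "i \<le> d" using ir degree_le_vdeg[of r a] r by simp
    have "cf n h ((d + k - i) * n + r) \<noteq> 0" using h0 unfolding cf_kr[OF n0 r] .
    hence le: "(d + k - i) * n + r \<le> k * n + mm" using l ckm unfolding lead_def using not_le by blast
    have "d + k - i = k"
    proof (rule ccontr)
      assume "d + k - i \<noteq> k"
      hence "Suc k \<le> d + k - i" using id by simp
      hence "Suc k * n \<le> (d + k - i) * n" by (rule mult_le_mono1)
      thus False using le mm(1) by simp
    qed
    hence iD: "i = d" using id by simp
    with le have "r \<le> mm" using \<open>d + k - i = k\<close> by simp
    with ne iD have "r < mm" by simp
    from mm_min[OF this] have "degree (a $ r) < d" using a0 by auto
    thus False using ir iD by simp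
  qed
  have "coeff (a \<bullet> h) (d + k) = (\<Sum>r\<in>{0..<n}. coeff (a $ r * h $ r) (d + k))"
    unfolding scalar_prod_def using hc by (simp add: coeff_sum)
  also have "\<dots> = (\<Sum>r\<in>{0..<n}. \<Sum>i\<le>d+k. coeff (a $ r) i * coeff (h $ r) (d + k - i))"
    by (simp add: coeff_mult)
  also have "\<dots> = (\<Sum>i\<le>d+k. coeff (a $ mm) i * coeff (h $ mm) (d + k - i))"
    by (rule sum_single) (use mm(1) term0 in \<open>auto intro: sum.neutral\<close>)
  also have "\<dots> = coeff (a $ mm) d * coeff (h $ mm) (d + k - d)"
    by (rule sum_single) (use mm(1) term0 in auto)
  also have "\<dots> = lead_coeff (a $ mm) * cf n h c"
  proof -
    have "cf n h c = coeff (h $ mm) k" unfolding ckm cf_kr[OF n0 mm(1)] ..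
    thus ?thesis using mm(3) by simp
  qed
  also have "\<dots> \<noteq> 0" using mm(2) l unfolding lead_def by simp
  finally show False using h unfolding syz_def by simp
qed

lemma wr_np:
  assumes r: "r < n" "r \<noteq> mm"
  shows "d * n + r \<in> nonpivots AA"
proof -
  define w where "w = vec n (\<lambda>i. if i = r then a $ mm else if i = mm then - a $ r else 0)"
  have wc: "w \<in> carrier_vec n" unfolding w_def by simp
  have "a \<bullet> w = (\<Sum>i\<in>{0..<n}. (if i = r then a $ i * a $ mm else 0) + (if i = mm then a $ i * (- a $ r) else 0))"
    unfolding scalar_prod_def w_def by (rule sum.cong) (use r in auto)
  also have "\<dots> = 0" unfolding sum.distrib using r mm(1) by (simp add: mult.commute)
  finally have ws: "w \<in> syz a" using wc unfolding syz_def by simp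
  have lw: "lead n w (d * n + r)" unfolding lead_def
  proof (intro conjI allI impI)
    show "cf n w (d * n + r) \<noteq> 0"
    proof -
      have "cf n w (d * n + r) = coeff (a $ mm) d" unfolding cf_kr[OF n0 r(1)] w_def using r by simp
      also have "\<dots> = coeff (a $ mm) (degree (a $ mm))" using mm(3) by simp
      also have "\<dots> \<noteq> 0" using mm(2) by simp
      finally show ?thesis .
    qed
    fix c' assume c': "d * n + r < c'"
    define k' where "k' = c' div n"
    define r' where "r' = c' mod n"
    have r'n: "r' < n" unfolding r'_def using n0 by simp
    have c'e: "c' = k' * n + r'" unfolding k'_def r'_def by simp
    have kd: "d \<le> k'"
    proof (rule ccontr)
      assume "\<not> d \<le> k'"
      hence "Suc k' * n \<le> d * n" by (intro mult_le_mono1) simp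
      thus False using c' c'e r'n by simp
    qed
    have cfw: "cf n w c' = coeff (w $ r') k'" unfolding cf_def k'_def r'_def ..
    show "cf n w c' = 0"
    proof (cases "r' = r")
      case True
      hence "k' \<noteq> d" using c' c'e by auto
      hence "k' > d" using kd by simp
      hence "coeff (a $ mm) k' = 0" using coeff_a_zero[OF mm(1)] by simp
      moreover have "cf n w c' = coeff (a $ mm) k'" using cfw True r'n by (simp add: w_def)
      ultimately show ?thesis by simp
    next
      case False
      show ?thesis
      proof (cases "r' = mm")
        case True
        have "coeff (a $ r) k' = 0"
        proof (cases "r < mm")
          case True
          from mm_min[OF True] show ?thesis
          proof
            assume "degree (a $ r) < d" thus ?thesis using kd by (intro coeff_eq_0) simp
          qed simp
        next
          case False
          hence "mm < r" using r by simp
          hence "k' \<noteq> d" using c' c'e \<open>r' = mm\<close> by auto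
          hence "k' > d" using kd by simp
          thus ?thesis using coeff_a_zero[OF r(1)] by simp
        qed
        moreover have "cf n w c' = coeff (- a $ r) k'" using cfw True False r'n by (simp add: w_def)
        ultimately show ?thesis by simp
      qed (use False r'n cfw in \<open>simp add: w_def\<close>)
    qed
  qed
  have "d * n + r < N"
  proof -
    have "d * n + r < d * n + n" using r by simp
    thus ?thesis by (simp add: algebra_simps)
  qed
  thus ?thesis using syz_lead_np[OF ws lw] by simp
qed

end



context musetup2
begin

abbreviation "NP \<equiv> nonpivots AA"
definition "BS = {x \<in> NP. \<forall>y\<in>NP. y mod n = x mod n \<longrightarrow> x \<le> y}"
abbreviation "qq \<equiv> basic_nonpivots AA n"

lemma qq_eq: "qq = sorted_list_of_set BS" unfolding basic_nonpivots_def BS_def ..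

lemma NP_bound: "c \<in> NP \<Longrightarrow> c < N"
  using A_carrier unfolding nonpivots_def by auto

lemma NP_fin: "finite NP"
  by (rule finite_subset[of _ "{..<N}"]) (use NP_bound in auto)

lemma BS_sub: "BS \<subseteq> NP" unfolding BS_def by auto

lemma BS_fin: "finite BS" using finite_subset[OF BS_sub NP_fin] .

lemma np_mod: "c \<in> NP \<Longrightarrow> c mod n \<noteq> mm"
  using np_syz_lead no_lead_mm by blast

lemma class_min:
  assumes c: "c \<in> NP"
  shows "\<exists>y\<in>BS. y mod n = c mod n \<and> y \<le> c"
proof -
  define T where "T = {y \<in> NP. y mod n = c mod n}"
  have Tfin: "finite T" unfolding T_def using NP_fin by simp
  have cT: "c \<in> T" unfolding T_def using c by simp
  define y where "y = Min T"
  have yT: "y \<in> T" unfolding y_def by (rule Min_in[OF Tfin]) (use cT in auto)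
  have ymin: "y \<le> z" if "z \<in> T" for z unfolding y_def by (rule Min_le[OF Tfin that])
  have "y \<in> BS" unfolding BS_def using yT ymin unfolding T_def by auto
  moreover have "y mod n = c mod n" using yT unfolding T_def by simp
  moreover have "y \<le> c" using ymin[OF cT] .
  ultimately show ?thesis by blast
qed

lemma BS_inj: "x \<in> BS \<Longrightarrow> y \<in> BS \<Longrightarrow> x mod n = y mod n \<Longrightarrow> x = y"
  unfolding BS_def by (auto intro: antisym)

lemma BS_card: "card BS = n - 1"
proof -
  have "bij_betw (\<lambda>x. x mod n) BS ({..<n} - {mm})"
  proof (rule bij_betw_imageI)
    show "inj_on (\<lambda>x. x mod n) BS" by (rule inj_onI) (use BS_inj in auto)
    show "(\<lambda>x. x mod n) ` BS = {..<n} - {mm}"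
    proof
      show "(\<lambda>x. x mod n) ` BS \<subseteq> {..<n} - {mm}"
        using np_mod BS_sub n0 by auto
      show "{..<n} - {mm} \<subseteq> (\<lambda>x. x mod n) ` BS"
      proof
        fix r assume "r \<in> {..<n} - {mm}"
        hence r: "r < n" "r \<noteq> mm" by auto
        obtain y where "y \<in> BS" "y mod n = (d * n + r) mod n"
          using class_min[OF wr_np[OF r]] by blast
        moreover have "(d * n + r) mod n = r" using r by simp
        ultimately show "r \<in> (\<lambda>x. x mod n) ` BS" by force
      qed
    qed
  qed
  hence "card BS = card ({..<n} - {mm})" by (rule bij_betw_same_card)
  also have "\<dots> = n - 1" using mm(1) by simp
  finally show ?thesis .
qed

lemma qq_len: "length qq = n - 1"
  unfolding qq_eq using BS_card by simp

lemma qq_set: "set qq = BS" unfolding qq_eq using BS_fin by simp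

lemma qq_distinct: "distinct qq" unfolding qq_eq by simp

lemma U3: "i < n - 1 \<Longrightarrow> j < n - 1 \<Longrightarrow> qq ! i mod n = qq ! j mod n \<Longrightarrow> i = j"
proof -
  assume i: "i < n - 1" and j: "j < n - 1" and m: "qq ! i mod n = qq ! j mod n"
  have "qq ! i \<in> BS" "qq ! j \<in> BS" using i j qq_len qq_set nth_mem by (metis)+
  hence "qq ! i = qq ! j" using BS_inj m by blast
  thus "i = j" using nth_eq_iff_index_eq[OF qq_distinct] i j qq_len by simp
qed

lemma U4:
  assumes h: "h \<in> syz a" and l: "lead n h c"
  shows "\<exists>j < n - 1. qq ! j mod n = c mod n \<and> qq ! j \<le> c"
proof -
  define r where "r = c mod n"
  have rm: "r \<noteq> mm" unfolding r_def by (rule no_lead_mm[OF h l])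
  have rn: "r < n" unfolding r_def using n0 by simp
  have "\<exists>y\<in>BS. y mod n = r \<and> y \<le> c"
  proof (cases "c < N")
    case True
    show ?thesis using class_min[OF syz_lead_np[OF h l True]] unfolding r_def .
  next
    case False
    obtain y where y: "y \<in> BS" "y mod n = (d * n + r) mod n" "y \<le> d * n + r"
      using class_min[OF wr_np[OF rn rm]] by blast
    have "y < N" using NP_bound BS_sub y(1) by blast
    hence "y \<le> c" using False by simp
    moreover have "y mod n = r" using y(2) rn by simp
    ultimately show ?thesis using y(1) by blast
  qed
  then obtain y where y: "y \<in> BS" "y mod n = r" "y \<le> c" by blast
  from y(1) obtain j where j: "j < length qq" "qq ! j = y"
    unfolding qq_set[symmetric] in_set_conv_nth by blast
  show ?thesis using j y qq_len unfolding r_def by auto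
qed

lemma M_entry:
  assumes r: "r < n" and j: "j < n - 1"
  shows "mu_basis_alg a $$ (r,j) = (if qq ! j mod n = r then monom 1 (qq ! j div n) else 0)
     - (\<Sum>i<K. if pf i mod n = r then monom (EE $$ (i, qq ! j)) (pf i div n) else 0)"
proof -
  have "mu_basis_alg a $$ (r,j) = (if qq ! j mod n = r then monom 1 (qq ! j div n) else 0)
     - (\<Sum>i<length (pivots AA). if pivots AA ! i mod n = r then monom (EE $$ (i, qq ! j)) (pivots AA ! i div n) else 0)"
    unfolding mu_basis_alg_def Let_def EE_def using r j by simp
  also have "(\<Sum>i<length (pivots AA). if pivots AA ! i mod n = r then monom (EE $$ (i, qq ! j)) (pivots AA ! i div n) else 0)
      = (\<Sum>i<K. if pf i mod n = r then monom (EE $$ (i, qq ! j)) (pf i div n) else 0)"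
    unfolding pivots_eq by (rule sum.cong) auto
  finally show ?thesis .
qed

lemma U12:
  assumes j: "j < n - 1"
  shows "col (mu_basis_alg a) j \<in> syz a \<and> lead n (col (mu_basis_alg a) j) (qq ! j)
     \<and> cf n (col (mu_basis_alg a) j) (qq ! j) = 1"
proof -
  define c where "c = qq ! j"
  have cBS: "c \<in> BS" unfolding c_def using j qq_len qq_set nth_mem by metis
  hence cNP: "c \<in> NP" using BS_sub by blast
  have cN: "c < N" using NP_bound[OF cNP] .
  have nc: "\<And>i. i < K \<Longrightarrow> pf i \<noteq> c"
    using cNP pivotal_iff unfolding nonpivots_def by blast
  define xc where "xc = vec N (\<lambda>j. (if j = c then 1 else 0) - (\<Sum>i<K. if pf i = j then EE $$ (i,c) else 0))"
  have props: "EE *\<^sub>v xc = 0\<^sub>v (2*d+1)" "xc $ c = 1" "\<And>j. c < j \<Longrightarrow> j < N \<Longrightarrow> xc $ j = 0"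
    using nonpivot_vec[OF EE_carrier pf K1 K2 cN nc] unfolding xc_def by auto
  have xcc: "xc \<in> carrier_vec N" unfolding xc_def by simp
  define u where "u = col (mu_basis_alg a) j"
  have dimM: "dim_row (mu_basis_alg a) = n" "dim_col (mu_basis_alg a) = n - 1"
    unfolding mu_basis_alg_def Let_def by simp_all
  have uc: "u \<in> carrier_vec n" unfolding u_def col_def dimM by simp
  have cfu: "cf n u c' = (if c' < N then xc $ c' else 0)" for c'
  proof -
    define r' where "r' = c' mod n"
    define k' where "k' = c' div n"
    have r'n: "r' < n" unfolding r'_def using n0 by simp
    have "cf n u c' = coeff (mu_basis_alg a $$ (r', j)) k'"
      unfolding cf_def u_def r'_def[symmetric] k'_def[symmetric] using r'n dimM j by simp
    also have "\<dots> = (if c = c' then 1 else 0) - (\<Sum>i<K. if pf i = c' then EE $$ (i,c) else 0)"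
      unfolding M_entry[OF r'n j] c_def[symmetric]
      unfolding coeff_diff coeff_sum
    proof (intro arg_cong2[where f = minus] sum.cong refl)
      show "coeff (if c mod n = r' then monom 1 (c div n) else 0) k' = (if c = c' then 1 else 0)"
        using mod_div_eq_iff[of c c'] unfolding r'_def k'_def by auto
      fix i
      show "coeff (if pf i mod n = r' then monom (EE $$ (i, c)) (pf i div n) else 0) k'
          = (if pf i = c' then EE $$ (i, c) else 0)"
        using mod_div_eq_iff[of "pf i" c'] unfolding r'_def k'_def by auto
    qed
    also have "\<dots> = (if c' < N then xc $ c' else 0)"
    proof (cases "c' < N")
      case True thus ?thesis unfolding xc_def by auto
    next
      case False
      have "(\<Sum>i<K. if pf i = c' then EE $$ (i,c) else 0) = 0"
        by (rule sum.neutral) (use K1 False in force)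
      thus ?thesis using False cN by auto
    qed
    finally show ?thesis .
  qed
  have "pv xc = u" by (rule cf_eqI[OF pv_carrier uc n0]) (simp add: cf_pv cfu)
  moreover have "pv xc \<in> syz a" using syz_pv[OF xcc] ker_eq[OF xcc] props(1) by simp
  ultimately have us: "u \<in> syz a" by simp
  have ul: "lead n u c" unfolding lead_def cfu using props cN by auto
  have "cf n u c = 1" unfolding cfu using props cN by simp
  thus ?thesis using us ul unfolding u_def c_def by simp
qed

end

theorem theorem2_aux:
  fixes a :: "'k::field poly vec"
  assumes "dim_vec a > 1"
    and "a \<noteq> 0\<^sub>v (dim_vec a)"
  shows "is_mu_basis a (\<lambda>j. col (mu_basis_alg a) j)"
proof -
  interpret musetup2 a using assms by unfold_locales auto
  show ?thesis
    by (rule abstract_mu[where q = "\<lambda>j. qq ! j"]) (use assms U12 U3 U4 in auto)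
qed



theorem theorem2:
  fixes a :: "'k::field poly vec"
  assumes "dim_vec a > 1"
    and "a \<noteq> 0\<^sub>v (dim_vec a)"
  shows "is_mu_basis a (\<lambda>j. col (mu_basis_alg a) j)"
  using theorem2_aux[OF assms] .

end
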